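(* Let $n\ge 2$ and let $a_1,\dots,a_n\in\mathbb{C}$. Let $V(a_1,\dots,a_n)$ be the $n\times n$ Vieta matrix of $a_1,\dots,a_n$ (defined in the context). Then \[ \det V(a_1,\dots,a_n)=\prod_{1\le i<k\le n}(a_i-a_k). \]
   Context: For a finite list of numbers $b_1,\dots,b_m$ and an integer $j\ge 0$, let $e_j(b_1,\dots,b_m)$ denote the $j$-th elementary symmetric polynomial, i.e. $e_0=1$ and $e_j(b_1,\dots,b_m)=\sum_{1\le l_1<\dots<l_j\le m} b_{l_1}\cdots b_{l_j}$ for $1\le j\le m$. The Vieta matrix $V(a_1,\dots,a_n)$ of $a_1,\dots,a_n$ is the $n\times n$ matrix whose entry in row $j+1$ and column $i$ (for $j=0,1,\dots,n-1$ and $i=1,\dots,n$) is $e_j(a_1,\dots,a_{i-1},a_{i+1},\dots,a_n)$, the $j$-th elementary symmetric polynomial of the $n-1$ numbers obtained by omitting $a_i$. Thus its first row is all $1$'s, its second row has entries $\sum_{l\ne i}a_l$, and its last row has entries $\prod_{l\ne i}a_l$. For example, for $n=3$ it is $\begin{pmatrix}1&1&1\\ a_2+a_3&a_1+a_3&a_1+a_2\\ a_2a_3&a_1a_3&a_1a_2\end{pmatrix}$. *)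

theory Defs
  imports Complex_Main "Jordan_Normal_Form.Determinant"
begin

definition esym :: "nat \<Rightarrow> 'a::comm_ring_1 list \<Rightarrow> 'a" where
  "esym j bs = (\<Sum>S\<in>{S. S \<subseteq> {0..<length bs} \<and> card S = j}. \<Prod>l\<in>S. bs ! l)"

definition vieta_mat :: "'a::comm_ring_1 list \<Rightarrow> 'a mat" where
  "vieta_mat as = mat (length as) (length as)
     (\<lambda>(j, i). esym j (take i as @ drop (Suc i) as))"

end

theory Submission imports Defs begin

fun es :: "nat \<Rightarrow> 'a::comm_ring_1 list \<Rightarrow> 'a" where
  "es 0 _ = 1" | "es (Suc j) [] = 0" | "es (Suc j) (x#xs) = es (Suc j) xs + x * es j xs"

lemma esym_cons:
  fixes xs :: "'a::comm_ring_1 list"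
  shows "esym (Suc j) (x#xs) = esym (Suc j) xs + x * esym j xs"
proof -
  let ?N = "length xs"
  let ?A = "{S. S \<subseteq> {0..<Suc ?N} \<and> card S = Suc j}"
  let ?B = "{S. S \<subseteq> {0..<?N} \<and> card S = Suc j}"
  let ?C = "{S. S \<subseteq> {0..<?N} \<and> card S = j}"
  have fin: "finite ?A" by (rule finite_subset[of _ "Pow {0..<Suc ?N}"]) auto
  have split: "?A = ((`) Suc) ` ?B \<union> (\<lambda>T. insert 0 (Suc ` T)) ` ?C"
  proof (intro equalityI subsetI)
    fix S assume S: "S \<in> ?A"
    show "S \<in> ((`) Suc) ` ?B \<union> (\<lambda>T. insert 0 (Suc ` T)) ` ?C"
    proof (cases "0 \<in> S")
      case True
      define T where "T = (\<lambda>i. i - 1) ` (S - {0})"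
      have ST: "S = insert 0 (Suc ` T)"
      proof (intro equalityI subsetI)
          fix y assume "y \<in> S" thus "y \<in> insert 0 (Suc ` T)" unfolding T_def by (cases y) force+
        next
          fix y assume "y \<in> insert 0 (Suc ` T)"
          then consider "y = 0" | z where "z \<in> S" "z \<noteq> 0" "y = Suc (z - 1)" unfolding T_def by blast
          then show "y \<in> S" using True by cases auto
      qed
      have fS: "finite S" using S finite_subset by blast
      have fT: "finite T" unfolding T_def using fS by simp
      have "card S = Suc (card (Suc ` T))"
        unfolding ST using fT by (subst card_insert_disjoint) auto
      hence "card T = j" using S by (simp add: card_image)
      moreover have "T \<subseteq> {0..<?N}" using S unfolding T_def by auto
      ultimately show ?thesis using ST by auto
    next
      case False
      define T where "T = (\<lambda>i. i - 1) ` S"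
      have ST: "S = Suc ` T"
      proof (intro equalityI subsetI)
          fix y assume "y \<in> S" thus "y \<in> Suc ` T" unfolding T_def using False by (cases y) force+
        next
          fix y assume "y \<in> Suc ` T" thus "y \<in> S" unfolding T_def using False by (auto, metis Suc_pred neq0_conv)
      qed
      hence "card T = Suc j" using S by (simp add: card_image)
      moreover have "T \<subseteq> {0..<?N}"
      proof (rule subsetI)
        fix z assume "z \<in> T"
        then obtain w where w: "w \<in> S" "z = w - 1" unfolding T_def by blast
        have "w < Suc ?N" using S w by auto
        moreover have "w \<noteq> 0"
        proof
          assume "w = 0" with w(1) False show False by simp
        qed
        ultimately show "z \<in> {0..<?N}" using w by auto
      qed
      ultimately show ?thesis using ST by auto
    qed
  next
    fix S assume "S \<in> ((`) Suc) ` ?B \<union> (\<lambda>T. insert 0 (Suc ` T)) ` ?C"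
    then show "S \<in> ?A"
    proof
      assume "S \<in> ((`) Suc) ` ?B" then show ?thesis by (auto simp: card_image)
    next
      assume "S \<in> (\<lambda>T. insert 0 (Suc ` T)) ` ?C"
      then obtain T where T: "T \<subseteq> {0..<?N}" "card T = j" "S = insert 0 (Suc ` T)" by auto
      have "finite T" using T(1) finite_subset by blast
      then show ?thesis using T by (auto simp: card_image card_insert_if)
    qed
  qed
  have disj: "((`) Suc) ` ?B \<inter> (\<lambda>T. insert 0 (Suc ` T)) ` ?C = {}" by auto
  have finB: "finite ?B" by (rule finite_subset[of _ "Pow {0..<?N}"]) auto
  have finC: "finite ?C" by (rule finite_subset[of _ "Pow {0..<?N}"]) auto
  have inj1: "inj_on ((`) Suc) ?B" by (rule inj_onI) (simp add: inj_image_eq_iff)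
  have inj2: "inj_on (\<lambda>T. insert 0 (Suc ` T)) ?C"
  proof (rule inj_onI)
    fix T1 T2 assume "insert 0 (Suc ` T1) = insert 0 (Suc ` T2)"
    hence "Suc ` T1 = Suc ` T2" by (metis Diff_insert_absorb image_iff nat.distinct(1))
    thus "T1 = T2" by (simp add: inj_image_eq_iff)
  qed
  have p1: "(\<Prod>l\<in>Suc ` T. (x#xs) ! l) = (\<Prod>l\<in>T. xs ! l)" for T
    by (subst prod.reindex) auto
  have p2: "(\<Prod>l\<in>insert 0 (Suc ` T). (x#xs) ! l) = x * (\<Prod>l\<in>T. xs ! l)" if "T \<in> ?C" for T
  proof -
    have "finite T" using that finite_subset by blast
    thus ?thesis by (simp add: p1)
  qed
  have "esym (Suc j) (x#xs) = (\<Sum>S\<in>((`) Suc) ` ?B. \<Prod>l\<in>S. (x#xs) ! l)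
      + (\<Sum>S\<in>(\<lambda>T. insert 0 (Suc ` T)) ` ?C. \<Prod>l\<in>S. (x#xs) ! l)"
    unfolding esym_def apply simp
    apply (subst split) by (rule sum.union_disjoint) (use finB finC disj in auto)
  also have "\<dots> = esym (Suc j) xs + x * esym j xs"
    unfolding esym_def
    apply (subst sum.reindex[OF inj1], subst sum.reindex[OF inj2])
    by (simp add: p1 p2 sum_distrib_left)
  finally show ?thesis .
qed

lemma esym_es: "esym j xs = es j xs"
proof (induction xs arbitrary: j)
  case Nil
  show ?case
  proof (cases j)
    case 0
    have "{S. S \<subseteq> {0..<0::nat} \<and> card S = 0} = {{}}" by auto
    thus ?thesis using 0 by (simp add: esym_def)
  next
    case (Suc k)
    have X: "{S. S \<subseteq> {0..<length ([]::'a list)} \<and> card S = Suc k} = {}" by auto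
    show ?thesis using Suc unfolding esym_def by (simp only: X sum.empty es.simps)
  qed
next
  case (Cons x xs)
  show ?case
  proof (cases j)
    case 0
    have "{S. S \<subseteq> {0..<length (x#xs)} \<and> card S = 0} = {{}}"
      by (auto, metis card_0_eq empty_iff finite_atLeastLessThan finite_subset)
    thus ?thesis using 0 by (simp add: esym_def)
  next
    case (Suc k)
    thus ?thesis using Cons by (simp add: esym_cons)
  qed
qed

lemma es_mid: "es (Suc j) (xs @ y # ys) = es (Suc j) (xs @ ys) + y * es j (xs @ ys)"
proof (induction xs arbitrary: j)
  case Nil then show ?case by simp
next
  case (Cons a xs)
  show ?case
  proof (cases j)
    case 0 then show ?thesis using Cons[of 0] by (simp add: algebra_simps)
  next
    case (Suc k) then show ?thesis using Cons[of j] Cons[of k] by (simp add: algebra_simps)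
  qed
qed


lemma vieta_idx: "j < length as \<Longrightarrow> i < length as \<Longrightarrow>
  vieta_mat as $$ (j,i) = es j (take i as @ drop (Suc i) as)"
  by (simp add: vieta_mat_def esym_es)

lemma vieta_carrier: "vieta_mat as \<in> carrier_mat (length as) (length as)"
  by (simp add: vieta_mat_def)

lemma det_vieta_snoc:
  fixes bs :: "'a::comm_ring_1 list"
  shows "det (vieta_mat (bs @ [x])) = det (vieta_mat bs) * (\<Prod>c<length bs. bs ! c - x)"
proof -
  define m where "m = length bs"
  define A where "A = vieta_mat (bs @ [x])"
  define U :: "'a mat" where "U = mat (Suc m) (Suc m) (\<lambda>(r,c). (if r = c then 1 else 0) - (if r = m \<and> c \<noteq> m then 1 else 0))"
  define B where "B = A * U"
  have A: "A \<in> carrier_mat (Suc m) (Suc m)" unfolding A_def m_def using vieta_carrier[of "bs @ [x]"] by simp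
  have U: "U \<in> carrier_mat (Suc m) (Suc m)" unfolding U_def by simp
  have B: "B \<in> carrier_mat (Suc m) (Suc m)" unfolding B_def using A U by simp
  have detU: "det U = 1"
  proof -
    have "det U = prod_list (diag_mat U)"
      by (rule det_lower_triangular[OF _ U]) (auto simp: U_def)
    also have "\<dots> = 1" unfolding prod_list_diag_prod using U by (simp add: U_def)
    finally show ?thesis .
  qed
  have detB: "det B = det A" unfolding B_def using det_mult[OF A U] detU by simp
  have Aidx: "A $$ (j, c) = es j (take c (bs @ [x]) @ drop (Suc c) (bs @ [x]))" if "j < Suc m" "c < Suc m" for j c
    unfolding A_def using that by (simp add: vieta_idx m_def)
  have Bidx: "B $$ (j, c) = A $$ (j, c) - (if c \<noteq> m then A $$ (j, m) else 0)" if "j < Suc m" "c < Suc m" for j c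
  proof -
    have "B $$ (j, c) = (\<Sum>r<Suc m. A $$ (j, r) * ((if r = c then 1 else 0) - (if r = m \<and> c \<noteq> m then 1 else 0)))"
      unfolding B_def using A U that by (simp add: scalar_prod_def U_def atLeast0LessThan)
    also have "\<dots> = (\<Sum>r<Suc m. (if r = c then A $$ (j, r) else 0)) - (\<Sum>r<Suc m. (if r = m \<and> c \<noteq> m then A $$ (j, r) else 0))"
      unfolding sum_subtractf[symmetric] by (rule sum.cong) auto
    also have "\<dots> = A $$ (j, c) - (if c \<noteq> m then A $$ (j, m) else 0)"
      using that by (simp add: sum.delta)
    finally show ?thesis .
  qed
  define d where "d c = take c bs @ drop (Suc c) bs" for c
  have Am: "A $$ (j, m) = es j bs" if "j < Suc m" for j
    using Aidx[OF that, of m] by (simp add: m_def)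
  have Ac: "A $$ (j, c) = es j (d c @ [x])" if "j < Suc m" "c < m" for j c
    using Aidx[OF that(1), of c] that(2) by (simp add: m_def d_def)
  have bsd: "bs = take c bs @ bs ! c # drop (Suc c) bs" if "c < m" for c
    using that m_def by (simp add: id_take_nth_drop)
  have B0: "B $$ (0, c) = (if c = m then 1 else 0)" if "c < Suc m" for c
    using that by (auto simp: Bidx Am Ac)
  have BS: "B $$ (Suc j, c) = (x - bs ! c) * vieta_mat bs $$ (j, c)" if "j < m" "c < m" for j c
  proof -
    have "B $$ (Suc j, c) = es (Suc j) (d c @ [x]) - es (Suc j) bs"
      using that by (simp add: Bidx Am Ac)
    also have "es (Suc j) (d c @ [x]) = es (Suc j) (d c) + x * es j (d c)"
      using es_mid[of j "d c" x "[]"] by simp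
    also have "es (Suc j) bs = es (Suc j) (d c) + bs ! c * es j (d c)"
      using es_mid[of j "take c bs" "bs ! c" "drop (Suc c) bs"] bsd[OF that(2)] by (simp add: d_def)
    finally show ?thesis using that by (simp add: vieta_idx m_def d_def algebra_simps)
  qed
  define D :: "'a mat" where "D = mat m m (\<lambda>(i,k). if i = k then x - bs ! i else 0)"
  have V: "vieta_mat bs \<in> carrier_mat m m" using vieta_carrier m_def by simp
  have D: "D \<in> carrier_mat m m" unfolding D_def by simp
  have del: "mat_delete B 0 m = vieta_mat bs * D"
  proof (rule eq_matI)
    fix i j assume ij: "i < dim_row (vieta_mat bs * D)" "j < dim_col (vieta_mat bs * D)"
    hence ij': "i < m" "j < m" using V D by auto
    have "(vieta_mat bs * D) $$ (i, j) = (\<Sum>k\<in>{0..<m}. vieta_mat bs $$ (i, k) * (if k = j then x - bs ! k else 0))"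
      using ij' V D by (simp add: scalar_prod_def D_def)
    also have "\<dots> = (\<Sum>k\<in>{0..<m}. if k = j then vieta_mat bs $$ (i, k) * (x - bs ! k) else 0)"
      by (rule sum.cong) auto
    also have "\<dots> = vieta_mat bs $$ (i, j) * (x - bs ! j)" using ij' by (simp add: sum.delta')
    finally show "mat_delete B 0 m $$ (i, j) = (vieta_mat bs * D) $$ (i, j)"
      using ij' B by (simp add: mat_delete_def BS)
  qed (use B V D in auto)
  have detD: "det D = (\<Prod>c<m. x - bs ! c)"
  proof -
    have "det D = prod_list (diag_mat D)"
      by (rule det_lower_triangular[OF _ D]) (auto simp: D_def)
    also have "\<dots> = (\<Prod>c<m. x - bs ! c)" unfolding prod_list_diag_prod using D
      by (simp add: D_def atLeast0LessThan)
    finally show ?thesis .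
  qed
  have "det A = det B" using detB by simp
  also have "\<dots> = (\<Sum>c<Suc m. B $$ (0, c) * cofactor B 0 c)"
    by (rule laplace_expansion_row[OF B]) simp
  also have "\<dots> = (\<Sum>c<Suc m. if c = m then cofactor B 0 c else 0)"
    by (rule sum.cong) (auto simp: B0)
  also have "\<dots> = cofactor B 0 m" by (simp add: sum.delta')
  also have "\<dots> = (-1) ^ m * (det (vieta_mat bs) * (\<Prod>c<m. x - bs ! c))"
    unfolding cofactor_def del det_mult[OF V D] detD by simp
  also have "\<dots> = det (vieta_mat bs) * (\<Prod>c<m. bs ! c - x)"
  proof -
    have "(\<Prod>c<m. bs ! c - x) = (\<Prod>c<m. - (x - bs ! c))" by simp
    also have "\<dots> = (-1) ^ m * (\<Prod>c<m. x - bs ! c)" by (subst prod_uminus) simp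
    finally show ?thesis by simp
  qed
  finally show ?thesis unfolding A_def m_def .
qed


lemma det_vieta_general:
  fixes as :: "'a::comm_ring_1 list"
  shows "det (vieta_mat as) = (\<Prod>i<length as. \<Prod>k\<in>{i<..<length as}. as ! i - as ! k)"
proof (induction as rule: rev_induct)
  case Nil
  have "vieta_mat ([]::'a list) \<in> carrier_mat 0 0" using vieta_carrier[of "[]::'a list"] by simp
  then show ?case by simp
next
  case (snoc x bs)
  define m where "m = length bs"
  have inner: "(\<Prod>k\<in>{i<..<Suc m}. (bs @ [x]) ! i - (bs @ [x]) ! k)
      = (bs ! i - x) * (\<Prod>k\<in>{i<..<m}. bs ! i - bs ! k)" if "i < m" for i
  proof -
    have "{i<..<Suc m} = insert m {i<..<m}" using that by auto
    hence "(\<Prod>k\<in>{i<..<Suc m}. (bs @ [x]) ! i - (bs @ [x]) ! k)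
        = ((bs @ [x]) ! i - (bs @ [x]) ! m) * (\<Prod>k\<in>{i<..<m}. (bs @ [x]) ! i - (bs @ [x]) ! k)"
      by simp
    also have "\<dots> = (bs ! i - x) * (\<Prod>k\<in>{i<..<m}. bs ! i - bs ! k)"
      using that by (simp add: nth_append m_def)
    finally show ?thesis .
  qed
  have "(\<Prod>i<length (bs @ [x]). \<Prod>k\<in>{i<..<length (bs @ [x])}. (bs @ [x]) ! i - (bs @ [x]) ! k)
      = (\<Prod>i<m. \<Prod>k\<in>{i<..<Suc m}. (bs @ [x]) ! i - (bs @ [x]) ! k)"
  proof -
    have "{m<..<Suc m} = {}" by auto
    thus ?thesis by (simp add: m_def)
  qed
  also have "\<dots> = (\<Prod>i<m. (bs ! i - x) * (\<Prod>k\<in>{i<..<m}. bs ! i - bs ! k))"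
    by (rule prod.cong) (auto simp: inner)
  also have "\<dots> = (\<Prod>i<m. bs ! i - x) * det (vieta_mat bs)"
    by (simp add: prod.distrib snoc m_def)
  finally show ?case by (simp add: det_vieta_snoc m_def mult.commute)
qed

theorem theorem1:
  fixes as :: "complex list"
  assumes "length as \<ge> 2"
  shows "det (vieta_mat as) =
    (\<Prod>i<length as. \<Prod>k\<in>{i<..<length as}. as ! i - as ! k)"
  by (rule det_vieta_general)

end
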